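(* Let $q'>0$, $e'\in(0,1)$, $q_{\max}>0$, and let $\mathcal D_1=\{(e,\omega'):0\le e\le1,\ 0\le\omega'\le\pi\}$, $\mathcal D_2=\{(q,\omega):0<q\le q_{\max},\ 0\le\omega\le\pi/2\}$. For each $(q,\omega)\in\mathcal D_2$, $$\min_{(e,\omega')\in\mathcal D_1}\delta_{\rm nod}=\max\{0,\ \ell^\omega_{\rm int},\ \ell^\omega_{\rm ext}\},\qquad \max_{(e,\omega')\in\mathcal D_1}\delta_{\rm nod}=\max\{u^\omega_{\rm int},\ u^\omega_{\rm ext},\ u^\omega_{\rm link}\},$$ where $\ell^\omega_{\rm int}(q,\omega)=q'-\frac{2q}{1-\cos\omega}$ (equal to $-\infty$ at $\omega=0$), $\ell^\omega_{\rm ext}(q,\omega)=q-Q'$, $u^\omega_{\rm int}(q,\omega)=p'-q$, $$u^\omega_{\rm ext}(q,\omega)=\min\Big\{\frac{2q}{1-\cos\omega}-\frac{p'}{1-\hat\xi'_*},\ \frac{2q}{1+\cos\omega}-q'\Big\},\quad \hat\xi'_*=\min\{\xi'_*,e'\},\quad \xi'_*=\frac{4q\cos\omega}{p'\sin^2\omega+\sqrt{p'^2\sin^4\omega+16q^2\cos^2\omega}},$$ $$u^\omega_{\rm link}(q,\omega)=\min\Big\{Q'-\frac{q(1+\hat e_* )}{1+\hat e_*\cos\omega},\ \frac{2q}{1-\cos\omega}-q'\Big\},\quad \hat e_*=\max\{0,\min\{e_*,1\}\},$$ $$e_*(q,\omega)=\frac{2\big(p'-q(1-e'^2)\big)}{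q(1-e'^2)+\sqrt{q^2(1-e'^2)^2+4p'\cos^2\omega\,\big(p'-q(1-e'^2)\big)}}.$$
   Context: For $q>0$, $e\in[0,1]$ and angles $\omega,\omega'$, define $r_{\pm}=\frac{q(1+e)}{1\pm e\cos\omega}$, $r'_{\pm}=\frac{q'(1+e')}{1\pm e'\cos\omega'}$ (extended-real value $+\infty$ allowed when a denominator vanishes; all functions may take values $\pm\infty$ as limits), $d^+=r'_+-r_+$, $d^-=r'_--r_-$, and the nodal distance $\delta_{\rm nod}(q,e,\omega,\omega')=\min\{|d^+|,|d^-|\}$. Also $p'=q'(1+e')$, $Q'=\frac{q'(1+e')}{1-e'}$. *)

theory Defs
  imports "HOL-Analysis.Analysis" "HOL-Library.Extended_Real"
begin

definition pdiv :: "real \<Rightarrow> real \<Rightarrow> ereal" where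
  "pdiv a b = (if b = 0 then \<infinity> else ereal (a / b))"

definition r_plus :: "real \<Rightarrow> real \<Rightarrow> real \<Rightarrow> ereal" where
  "r_plus q e w = pdiv (q * (1 + e)) (1 + e * cos w)"

definition r_minus :: "real \<Rightarrow> real \<Rightarrow> real \<Rightarrow> ereal" where
  "r_minus q e w = pdiv (q * (1 + e)) (1 - e * cos w)"

definition delta_nod :: "real \<Rightarrow> real \<Rightarrow> real \<Rightarrow> real \<Rightarrow> real \<Rightarrow> real \<Rightarrow> ereal" where
  "delta_nod q' e' q e w w' =
     min \<bar>r_plus q' e' w' - r_plus q e w\<bar> \<bar>r_minus q' e' w' - r_minus q e w\<bar>"

definition p_prime :: "real \<Rightarrow> real \<Rightarrow> real" where
  "p_prime q' e' = q' * (1 + e')"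

definition Q_prime :: "real \<Rightarrow> real \<Rightarrow> real" where
  "Q_prime q' e' = q' * (1 + e') / (1 - e')"

definition D1 :: "(real \<times> real) set" where
  "D1 = {(e, w'). 0 \<le> e \<and> e \<le> 1 \<and> 0 \<le> w' \<and> w' \<le> pi}"

definition l_int :: "real \<Rightarrow> real \<Rightarrow> real \<Rightarrow> real \<Rightarrow> ereal" where
  "l_int q' e' q w = ereal q' - pdiv (2 * q) (1 - cos w)"

definition l_ext :: "real \<Rightarrow> real \<Rightarrow> real \<Rightarrow> real \<Rightarrow> ereal" where
  "l_ext q' e' q w = ereal (q - Q_prime q' e')"

definition u_int :: "real \<Rightarrow> real \<Rightarrow> real \<Rightarrow> real \<Rightarrow> ereal" where
  "u_int q' e' q w = ereal (p_prime q' e' - q)"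

definition xi_star :: "real \<Rightarrow> real \<Rightarrow> real \<Rightarrow> real \<Rightarrow> real" where
  "xi_star q' e' q w =
     4 * q * cos w / (p_prime q' e' * (sin w)^2
        + sqrt ((p_prime q' e')^2 * (sin w)^4 + 16 * q^2 * (cos w)^2))"

definition xi_hat :: "real \<Rightarrow> real \<Rightarrow> real \<Rightarrow> real \<Rightarrow> real" where
  "xi_hat q' e' q w = min (xi_star q' e' q w) e'"

definition u_ext :: "real \<Rightarrow> real \<Rightarrow> real \<Rightarrow> real \<Rightarrow> ereal" where
  "u_ext q' e' q w =
     min (pdiv (2 * q) (1 - cos w) - ereal (p_prime q' e' / (1 - xi_hat q' e' q w)))
         (pdiv (2 * q) (1 + cos w) - ereal q')"

definition e_star :: "real \<Rightarrow> real \<Rightarrow> real \<Rightarrow> real \<Rightarrow> real" where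
  "e_star q' e' q w =
     2 * (p_prime q' e' - q * (1 - e'^2)) /
       (q * (1 - e'^2) + sqrt ((q * (1 - e'^2))^2
          + 4 * p_prime q' e' * (cos w)^2 * (p_prime q' e' - q * (1 - e'^2))))"

definition e_hat :: "real \<Rightarrow> real \<Rightarrow> real \<Rightarrow> real \<Rightarrow> real" where
  "e_hat q' e' q w = max 0 (min (e_star q' e' q w) 1)"

definition u_link :: "real \<Rightarrow> real \<Rightarrow> real \<Rightarrow> real \<Rightarrow> ereal" where
  "u_link q' e' q w =
     min (ereal (Q_prime q' e' - q * (1 + e_hat q' e' q w) / (1 + e_hat q' e' q w * cos w)))
         (pdiv (2 * q) (1 - cos w) - ereal q')"

end

theory Submission
  imports Defs
begin

definition fp :: "real \<Rightarrow> real \<Rightarrow> real \<Rightarrow> real" where "fp q c e = q*(1+e)/(1+e*c)"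
definition fm :: "real \<Rightarrow> real \<Rightarrow> real \<Rightarrow> real" where "fm q c e = q*(1+e)/(1-e*c)"

lemma ec_le1: "0\<le>c \<Longrightarrow> c\<le>1 \<Longrightarrow> 0\<le>e \<Longrightarrow> e\<le>1 \<Longrightarrow> e*c \<le> (1::real)"
  by (simp add: mult_le_one)
lemma ec_lt1: "0\<le>c \<Longrightarrow> c<1 \<Longrightarrow> 0\<le>e \<Longrightarrow> e\<le>1 \<Longrightarrow> e*c < (1::real)"
proof -
  assume h: "0\<le>c" "c<1" "0\<le>e" "e\<le>1"
  have "e*c \<le> 1*c" using h by (intro mult_right_mono) auto
  then show ?thesis using h by linarith
qed

lemma fp_lo: "0\<le>c \<Longrightarrow> c\<le>1 \<Longrightarrow> 0\<le>e \<Longrightarrow> e\<le>1 \<Longrightarrow> (q::real)>0 \<Longrightarrow> q \<le> fp q c e"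
proof -
  assume h: "0\<le>c" "c\<le>1" "0\<le>e" "e\<le>1" "q>0"
  have p: "1+e*c>0" using h by (simp add: add_pos_nonneg)
  have "q*(1+e*c) \<le> q*(1+e)" using h mult_left_mono[of c 1 e] by simp
  then show ?thesis using p unfolding fp_def by (simp add: le_divide_eq)
qed
lemma fp_hi: "0\<le>c \<Longrightarrow> c\<le>1 \<Longrightarrow> 0\<le>e \<Longrightarrow> e\<le>1 \<Longrightarrow> (q::real)>0 \<Longrightarrow> fp q c e \<le> 2*q/(1+c)"
proof -
  assume h: "0\<le>c" "c\<le>1" "0\<le>e" "e\<le>1" "q>0"
  have "0 \<le> q*((1-e)*(1-c))" using h by simp
  moreover have "1+e*c>0" "1+c>0" using h by (auto simp: add_pos_nonneg)
  ultimately show ?thesis unfolding fp_def by (simp add: field_simps)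
qed
lemma fm_lo: "0\<le>c \<Longrightarrow> c<1 \<Longrightarrow> 0\<le>e \<Longrightarrow> e\<le>1 \<Longrightarrow> (q::real)>0 \<Longrightarrow> q \<le> fm q c e"
proof -
  assume h: "0\<le>c" "c<1" "0\<le>e" "e\<le>1" "q>0"
  have p: "1-e*c>0" using ec_lt1[OF h(1-4)] by simp
  have "0\<le>e*c" using h by simp
  hence "1-e*c \<le> 1+e" using h by linarith
  hence "q*(1-e*c) \<le> q*(1+e)" using h by simp
  then show ?thesis using p unfolding fm_def by (simp add: le_divide_eq)
qed
lemma fm_hi: "0\<le>c \<Longrightarrow> c<1 \<Longrightarrow> 0\<le>e \<Longrightarrow> e\<le>1 \<Longrightarrow> (q::real)>0 \<Longrightarrow> fm q c e \<le> 2*q/(1-c)"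
proof -
  assume h: "0\<le>c" "c<1" "0\<le>e" "e\<le>1" "q>0"
  have p: "1-e*c>0" using ec_lt1[OF h(1-4)] by simp
  have "0 \<le> q*((1-e)*(1+c))" using h by simp
  then have "q*(1+e)*(1-c) \<le> 2*q*(1-e*c)" by (simp add: algebra_simps)
  then show ?thesis using p h unfolding fm_def by (simp add: divide_simps)
qed
lemma fp_le_fm: "0\<le>c \<Longrightarrow> c<1 \<Longrightarrow> 0\<le>e \<Longrightarrow> e\<le>1 \<Longrightarrow> (q::real)>0 \<Longrightarrow> fp q c e \<le> fm q c e"
proof -
  assume h: "0\<le>c" "c<1" "0\<le>e" "e\<le>1" "q>0"
  have p: "1-e*c>0" using ec_lt1[OF h(1-4)] by simp
  have "1-e*c \<le> 1+e*c" "0 < 1+e*c" using h by (simp_all add: add_pos_nonneg)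
  then show ?thesis unfolding fp_def fm_def using p h
    by (intro divide_left_mono) (auto intro!: mult_pos_pos)
qed
lemma fp_mono: "0\<le>c \<Longrightarrow> c\<le>1 \<Longrightarrow> 0\<le>e1 \<Longrightarrow> e1\<le>e2 \<Longrightarrow> e2\<le>1 \<Longrightarrow> (q::real)>0 \<Longrightarrow> fp q c e1 \<le> fp q c e2"
proof -
  assume h: "0\<le>c" "c\<le>1" "0\<le>e1" "e1\<le>e2" "e2\<le>1" "q>0"
  have p1: "1+e1*c>0" "1+e2*c>0" using h by (auto simp: add_pos_nonneg)
  have "0 \<le> q*((e2-e1)*(1-c))" using h by simp
  then have "q*(1+e1)*(1+e2*c) \<le> q*(1+e2)*(1+e1*c)" by (simp add: algebra_simps)
  then show ?thesis using p1 unfolding fp_def by (simp add: divide_simps)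
qed
lemma fm_mono: "0\<le>c \<Longrightarrow> c<1 \<Longrightarrow> 0\<le>e1 \<Longrightarrow> e1\<le>e2 \<Longrightarrow> e2\<le>1 \<Longrightarrow> (q::real)>0 \<Longrightarrow> fm q c e1 \<le> fm q c e2"
proof -
  assume h: "0\<le>c" "c<1" "0\<le>e1" "e1\<le>e2" "e2\<le>1" "q>0"
  have p1: "1-e1*c>0" "1-e2*c>0" using ec_lt1[of c e1] ec_lt1[of c e2] h by auto
  have "0 \<le> q*((e2-e1)*(1+c))" using h by simp
  then have "q*(1+e1)*(1-e2*c) \<le> q*(1+e2)*(1-e1*c)" by (simp add: algebra_simps)
  then show ?thesis using p1 unfolding fm_def by (simp add: divide_simps)
qed

lemma a_bounds:
  assumes "(q'::real)>0" "0<e'" "e'<1" "-e'\<le>x" "x\<le>e'"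
  shows "q' \<le> q'*(1+e')/(1+x)" "q'*(1+e')/(1+x) \<le> q'*(1+e')/(1-e')"
    "q' \<le> q'*(1+e')/(1-x)" "q'*(1+e')/(1-x) \<le> q'*(1+e')/(1-e')"
proof -
  have "1+x>0" "1-x>0" "1-e'>0" using assms by auto
  then show "q' \<le> q'*(1+e')/(1+x)" "q' \<le> q'*(1+e')/(1-x)" using assms by (simp_all add: le_divide_eq)
  show "q'*(1+e')/(1+x) \<le> q'*(1+e')/(1-e')" "q'*(1+e')/(1-x) \<le> q'*(1+e')/(1-e')"
    using assms \<open>1+x>0\<close> \<open>1-x>0\<close> \<open>1-e'>0\<close> by (auto intro!: divide_left_mono mult_pos_pos)
qed

lemma a_mono: "(p::real)>0 \<Longrightarrow> -1<x \<Longrightarrow> x\<le>y \<Longrightarrow> y<1 \<Longrightarrow> p/(1+y) \<le> p/(1+x) \<and> p/(1-x) \<le> p/(1-y)"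
  by (auto intro!: divide_left_mono mult_pos_pos)

lemma min_ab: "(p::real)>0 \<Longrightarrow> -1<x \<Longrightarrow> x<1 \<Longrightarrow> min (p/(1+x)) (p/(1-x)) \<le> p"
  by (cases "x\<ge>0") (auto simp: min_le_iff_disj divide_simps)

lemma xi_root:
  fixes p q c ss :: real
  assumes "p>0" "q>0" "0\<le>c" "ss>0"
  defines "X \<equiv> 4*q*c/(p* ss + sqrt(p^2* ss^2 + 16*q^2*c^2))"
  shows "2*q*c*X^2 + p* ss*X - 2*q*c = 0" "0 \<le> X"
proof -
  define S where "S = sqrt(p^2* ss^2 + 16*q^2*c^2)"
  have S2: "S^2 = p^2* ss^2 + 16*q^2*c^2" unfolding S_def by (simp add: add_nonneg_nonneg)
  have S0: "S \<ge> 0" unfolding S_def by simp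
  define den where "den = p* ss + S"
  have dp: "den > 0" unfolding den_def using assms S0 by (simp add: add_pos_nonneg)
  have XD: "X*den = 4*q*c" unfolding X_def S_def[symmetric] den_def[symmetric] using dp by simp
  have "(2*q*c*X^2 + p* ss*X - 2*q*c)*den^2 = 2*q*c*(X*den)^2 + p* ss*(X*den)*den - 2*q*c*den^2"
    by (simp add: algebra_simps power2_eq_square)
  also have "\<dots> = 2*q*c*(4*q*c)^2 + p* ss*(4*q*c)*den - 2*q*c*den^2" by (simp only: XD)
  also have "\<dots> = 2*q*c*(16*q^2*c^2 + p^2* ss^2 - S^2)"
    unfolding den_def by (simp add: algebra_simps power2_eq_square)
  also have "\<dots> = 0" using S2 by simp
  finally show "2*q*c*X^2 + p* ss*X - 2*q*c = 0" using dp by simp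
  show "0 \<le> X" unfolding X_def using assms by simp
qed

lemma e_root:
  fixes p A c :: real
  assumes "p>0" "A>0" "0\<le>c" "c\<le>1"
  defines "E \<equiv> 2*(p - A)/(A + sqrt(A^2 + 4*p*c^2*(p-A)))"
  shows "p*c^2*E^2 + A*E + A - p = 0" "A^2 + 4*p*c^2*(p-A) \<ge> 0"
    "E \<ge> 0 \<longleftrightarrow> p \<ge> A"
proof -
  show K: "A^2 + 4*p*c^2*(p-A) \<ge> 0"
  proof (cases "p \<ge> A")
    case True then show ?thesis using assms by (simp add: add_nonneg_nonneg)
  next
    case False
    have c2: "c^2 \<le> 1" using assms by (simp add: power_le_one)
    have "4*p*c^2*(A-p) \<le> 4*p*1*(A-p)" using False assms c2
      by (intro mult_right_mono mult_left_mono) auto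
    moreover have "A^2 - 4*p*(A-p) = (A-2*p)^2" by (simp add: algebra_simps power2_eq_square)
    moreover have "A^2 + 4*p*c^2*(p-A) = A^2 - 4*p*c^2*(A-p)" by (simp add: algebra_simps)
    moreover have "0 \<le> (A-2*p)^2" by simp
    ultimately show ?thesis by linarith
  qed
  define S where "S = sqrt(A^2 + 4*p*c^2*(p-A))"
  have S2: "S^2 = A^2 + 4*p*c^2*(p-A)" unfolding S_def by (rule real_sqrt_pow2[OF K])
  have S0: "S \<ge> 0" unfolding S_def using K by simp
  define den where "den = A + S"
  have dp: "den > 0" unfolding den_def using assms S0 by simp
  have XD: "E*den = 2*(p-A)" unfolding E_def S_def[symmetric] den_def[symmetric] using dp by simp
  have "(p*c^2*E^2 + A*E + A - p)*den^2 = p*c^2*(E*den)^2 + A*(E*den)*den + (A-p)*den^2"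
    by (simp add: algebra_simps power2_eq_square)
  also have "\<dots> = p*c^2*(2*(p-A))^2 + A*(2*(p-A))*den + (A-p)*den^2" by (simp only: XD)
  also have "\<dots> = (p-A)*(4*p*c^2*(p-A) + A^2 - S^2)"
    unfolding den_def by (simp add: algebra_simps power2_eq_square)
  also have "\<dots> = 0" using S2 by simp
  finally show "p*c^2*E^2 + A*E + A - p = 0" using dp by simp
  show "E \<ge> 0 \<longleftrightarrow> p \<ge> A" unfolding E_def S_def[symmetric] using dp[unfolded den_def]
    by (simp add: zero_le_divide_iff)
qed

lemma xi_ident:
  fixes p q c y :: real
  assumes "0\<le>c" "c<1" "-1<y" "y<1"
  shows "(2*q/(1-c) - p/(1-y)) - (2*q/(1+c) - p/(1+y)) = -2*(2*q*c*y^2 + p*(1-c^2)*y - 2*q*c)/((1-c^2)*(1-y^2))"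
proof -
  have h: "1-c > 0" "1+c > 0" "1-y>0" "1+y>0" using assms by auto
  have "(1-c^2)*(1-y^2) = ((1-c)*(1+c))*((1-y)*(1+y))" by (simp add: algebra_simps power2_eq_square)
  moreover have "(2*q/(1-c) - p/(1-y)) - (2*q/(1+c) - p/(1+y)) = -2*(2*q*c*y^2 + p*(1-c^2)*y - 2*q*c)/(((1-c)*(1+c))*((1-y)*(1+y)))"
    using h by (simp add: divide_simps) (simp add: algebra_simps power2_eq_square)
  ultimately show ?thesis by simp
qed

lemma e_ident0:
  fixes q' e' q c y :: real
  assumes a: "1-y*c > 0" and b: "1+y*c > 0" and h: "1-e' > 0" "1+e' > 0"
  shows "(q'*(1+e')/(1-e') + q') - (fp q c y + fm q c y)
     = -2*(q'*(1+e')*c^2*y^2 + q*(1-e'^2)*y + q*(1-e'^2) - q'*(1+e'))/((1-e'^2)*(1-y^2*c^2))"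
proof -
  have s1: "fp q c y + fm q c y = (2*q*(1+y))/((1+y*c)*(1-y*c))" unfolding fp_def fm_def
    using a b by (simp add: add_frac_eq) (simp add: algebra_simps)
  have s2a: "q'*(1+e')/(1-e') + q' = 2*q'/(1-e')"
    using h by (simp add: field_simps)
  have s2b: "(2*q'*(1+e'))/((1-e')*(1+e')) = 2*q'/(1-e')"
    using h by simp
  have s2: "q'*(1+e')/(1-e') + q' = (2*q'*(1+e'))/((1-e')*(1+e'))" using s2a s2b by simp
  have d1: "(1-e'^2)*(1-y^2*c^2) = ((1-e')*(1+e'))*((1+y*c)*(1-y*c))" by (simp add: algebra_simps power2_eq_square)
  have "(2*q'*(1+e'))/((1-e')*(1+e')) - (2*q*(1+y))/((1+y*c)*(1-y*c))
     = ((2*q'*(1+e'))*((1+y*c)*(1-y*c)) - (2*q*(1+y))*((1-e')*(1+e')))/(((1-e')*(1+e'))*((1+y*c)*(1-y*c)))"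
    using a b h by (intro diff_frac_eq) auto
  also have "\<dots> = -2*(q'*(1+e')*c^2*y^2 + q*(1-e'^2)*y + q*(1-e'^2) - q'*(1+e'))/((1-e'^2)*(1-y^2*c^2))"
    unfolding d1 by (rule arg_cong2[where f="(/)"]) (simp_all add: algebra_simps power2_eq_square)
  finally show ?thesis using s1 s2 by simp
qed
lemma e_ident:
  fixes q' e' q c y :: real
  assumes "0\<le>c" "c<1" "0\<le>y" "y\<le>1" "0<e'" "e'<1"
  shows "(q'*(1+e')/(1-e') + q') - (fp q c y + fm q c y)
     = -2*(q'*(1+e')*c^2*y^2 + q*(1-e'^2)*y + q*(1-e'^2) - q'*(1+e'))/((1-e'^2)*(1-y^2*c^2))"
proof -
  have a: "1-y*c > 0" using ec_lt1[of c y] assms by simp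
  have b: "1+y*c > 0" using assms by (simp add: add_pos_nonneg)
  show ?thesis by (rule e_ident0) (use a b assms in auto)
qed

lemma cancel_aux: "(D::real) \<noteq> 0 \<Longrightarrow> B \<noteq> 0 \<Longrightarrow> (w * B/D)/(B/D) = w" by (simp add: field_simps)

lemma lin4: "(a1::real) \<le> b1 \<Longrightarrow> a2 \<le> b2 \<Longrightarrow> b1 + b2 + k - m = 0 \<Longrightarrow> a1 + a2 + k - m \<le> 0" by linarith
lemma lin3: "(a1::real) \<le> b1 \<Longrightarrow> a2 \<le> b2 \<Longrightarrow> b1 + b2 - k = 0 \<Longrightarrow> a1 + a2 - k \<le> 0" by linarith

lemma mx1: "(x::real) \<le> max x (max y z)" by simp
lemma mx2: "(y::real) \<le> max x (max y z)" by simp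
lemma mx3: "(z::real) \<le> max x (max y z)" by simp

lemma mx_cases: "max (x::real) (max y z) = x \<or> max x (max y z) = y \<or> max x (max y z) = z"
  by (simp add: max_def)

lemma g1: "(r::real) - b = f - a \<Longrightarrow> r - b \<le> \<bar>a - f\<bar>" by (simp add: abs_if)
lemma g2: "(r::real) - b \<le> \<bar>b - r\<bar>" by (simp add: abs_if)

lemma sandw: "(m::real) = t \<Longrightarrow> d \<le> m \<Longrightarrow> t \<le> d \<Longrightarrow> d = m" by simp

lemma absb: "(a::real) \<le> U - V \<Longrightarrow> b \<le> V - U \<Longrightarrow> max 0 (max a b) \<le> \<bar>U - V\<bar>" by (simp add: abs_if)

context
  fixes q'  e' q c :: real
  assumes q'p: "q'>0" and e'p: "0<e'" and e'1: "e'<1" and qp: "q>0" and c0: "0\<le>c" and c1: "c<1"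
begin

abbreviation (input) "pp \<equiv> q'*(1+e')"
abbreviation (input) "QQ \<equiv> q'*(1+e')/(1-e')"
abbreviation (input) "FF \<equiv> 2*q/(1+c)"
abbreviation (input) "RR \<equiv> 2*q/(1-c)"
abbreviation (input) "AA \<equiv> q*(1-e'^2)"
abbreviation (input) "xs \<equiv> 4*q*c/(pp*(1-c^2) + sqrt(pp^2*(1-c^2)^2 + 16*q^2*c^2))"
abbreviation (input) "xh \<equiv> min xs e'"
abbreviation (input) "es \<equiv> 2*(pp - AA)/(AA + sqrt(AA^2 + 4*pp*c^2*(pp-AA)))"
abbreviation (input) "eh \<equiv> max 0 (min es 1)"
abbreviation (input) "DD e x \<equiv> min \<bar>pp/(1+x) - fp q c e\<bar> \<bar>pp/(1-x) - fm q c e\<bar>"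
abbreviation (input) "MM \<equiv> max (pp - q) (max (min (RR - pp/(1-xh)) (FF - q')) (min (QQ - fp q c eh) (RR - q')))"
abbreviation (input) "Lo \<equiv> max 0 (max (q' - RR) (q - QQ))"

lemma ppos: "pp > 0" using q'p e'p by simp
lemma QQgt: "q' < QQ"
proof -
  have "q'*(1-e') < q'*(1+e')" using q'p e'p by simp
  then show ?thesis using e'1 by (simp add: less_divide_eq)
qed
lemma qRR: "q < RR"
proof -
  have "q*c \<ge> 0" using qp c0 by simp
  hence "q*(1-c) < 2*q" using qp by (simp add: right_diff_distrib)
  then show ?thesis using c1 by (simp add: less_divide_eq)
qed
lemma fp0: "fp q c 0 = q" by (simp add: fp_def)
lemma fm0: "fm q c 0 = q" by (simp add: fm_def)
lemma fp1: "fp q c 1 = FF" by (simp add: fp_def)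
lemma fm1: "fm q c 1 = RR" by (simp add: fm_def)
lemma a_e'1: "pp/(1+e') = q'" using e'p by simp
lemma a_e'2: "pp/(1-(-e')) = q'" "pp/(1+(-e')) = QQ" using e'p by simp_all

lemma ranges:
  assumes "0\<le>e" "e\<le>1" "-e'\<le>x" "x\<le>e'"
  shows "q' \<le> pp/(1+x)" "pp/(1+x) \<le> QQ" "q' \<le> pp/(1-x)" "pp/(1-x) \<le> QQ"
    "q \<le> fp q c e" "fp q c e \<le> FF" "q \<le> fm q c e" "fm q c e \<le> RR" "fp q c e \<le> fm q c e"
  using a_bounds[OF q'p e'p e'1 assms(3,4)] fp_lo[OF c0 _ assms(1,2) qp] fp_hi[OF c0 _ assms(1,2) qp]
    fm_lo[OF c0 c1 assms(1,2) qp] fm_hi[OF c0 c1 assms(1,2) qp] fp_le_fm[OF c0 c1 assms(1,2) qp] c1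
  by auto

lemma lo_bound:
  assumes "0\<le>e" "e\<le>1" "-e'\<le>x" "x\<le>e'"
  shows "Lo \<le> DD e x"
proof -
  note r = ranges[OF assms]
  have "q' - RR \<le> pp/(1+x) - fp q c e" "q - QQ \<le> fp q c e - pp/(1+x)"
       "q' - RR \<le> pp/(1-x) - fm q c e" "q - QQ \<le> fm q c e - pp/(1-x)" using r by linarith+
  hence "Lo \<le> \<bar>pp/(1+x) - fp q c e\<bar>" "Lo \<le> \<bar>pp/(1-x) - fm q c e\<bar>"
    by (simp_all only: absb)
  then show ?thesis by simp
qed

lemma lo_ex: "\<exists>e x. 0\<le>e \<and> e\<le>1 \<and> -e'\<le>x \<and> x\<le>e' \<and> DD e x = Lo"
proof (cases "q > QQ")
  case True
  have "q' < RR" "q' < QQ" using QQgt qRR True by linarith+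
  have "DD 0 (-e') = q - QQ" using True QQgt unfolding fp0 fm0 a_e'2 by simp
  moreover have "Lo = q - QQ" using True QQgt qRR by simp
  ultimately show ?thesis using e'p by (intro exI[of _ 0] exI[of _ "-e'"]) auto
next
  case F1: False
  show ?thesis
  proof (cases "RR < q'")
    case True
    have "fp q c 1 \<le> fm q c 1" using ranges[of 1 0] e'p by simp
    hence "FF \<le> RR" unfolding fp1 fm1 .
    have "DD 1 (-e') = q' - RR" using True QQgt \<open>FF \<le> RR\<close> unfolding fp1 fm1 a_e'2 by simp
    moreover have "Lo = q' - RR" using True QQgt qRR by simp
    ultimately show ?thesis using e'p by (intro exI[of _ 1] exI[of _ "-e'"]) auto
  next
    case False
    define vv where "vv = max q q'"
    have vv: "q \<le> vv" "q' \<le> vv" "vv \<le> RR" "vv \<le> QQ" "vv > 0" using F1 False QQgt qRR qp unfolding vv_def by auto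
    define e where "e = (vv-q)/(q+vv * c)"
    have den: "q+vv * c > 0" using vv c0 qp by (simp add: add_pos_nonneg)
    have e0: "0 \<le> e" unfolding e_def using den vv by simp
    have "vv * (1-c) \<le> 2*q" using vv(3) c1 by (simp add: le_divide_eq)
    hence "vv - q \<le> q + vv * c" by (simp add: algebra_simps)
    hence e1: "e \<le> 1" unfolding e_def using den by simp
    have ec: "1 - e*c > 0" using ec_lt1[OF c0 c1 e0 e1] by simp
    have "fm q c e = vv"
    proof -
      have "1 - e*c = q*(1+c)/(q+vv * c)" unfolding e_def using den by (simp add: field_simps)
      moreover have "1 + e = vv * (1+c)/(q+vv * c)" unfolding e_def using den by (simp add: field_simps)
      ultimately have "fm q c e = q*(vv * (1+c)/(q+vv * c))/(q*(1+c)/(q+vv * c))"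
        unfolding fm_def by simp
      also have "\<dots> = (vv*(q*(1+c))/(q+vv * c))/((q*(1+c))/(q+vv * c))" by (simp add: algebra_simps)
      also have "\<dots> = vv" using den qp c0 cancel_aux[of "q+vv * c" "q*(1+c)" vv] by simp
      finally show ?thesis .
    qed
    define x where "x = 1 - pp/vv"
    have "pp \<le> (1+e') * vv" using vv(2) e'p by (simp add: mult.commute mult_right_mono)
    hence x0: "-e' \<le> x" unfolding x_def using vv(5) by (simp add: divide_le_eq algebra_simps)
    have "(1-e') * vv \<le> pp" using vv(4) e'1 by (simp add: le_divide_eq mult.commute)
    hence "1 - e' \<le> pp/vv" using vv(5) by (simp add: le_divide_eq)
    hence x1: "x \<le> e'" unfolding x_def by linarith
    have "pp/(1-x) = vv" unfolding x_def using vv(5) ppos q'p e'p by simp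
    hence "DD e x = 0" using \<open>fm q c e = vv\<close> by simp
    moreover have "Lo = 0" using vv F1 False by simp
    ultimately show ?thesis using e0 e1 x0 x1 by (intro exI[of _ e] exI[of _ x]) simp
  qed
qed


lemma c2lt: "1 - c^2 > 0"
proof -
  have "c*c \<le> 1*c" using c0 c1 by (intro mult_right_mono) auto
  then show ?thesis using c1 by (simp add: power2_eq_square)
qed
lemma e2lt: "1 - e'^2 > 0"
proof -
  have "e'*e' \<le> 1*e'" using e'p e'1 by (intro mult_right_mono) auto
  then show ?thesis using e'1 by (simp add: power2_eq_square)
qed
lemma AApos: "AA > 0" using qp e2lt by simp

lemma xr: "2*q*c*xs^2 + pp*(1-c^2)*xs - 2*q*c = 0" "0 \<le> xs"
  using xi_root[of pp q c "1-c^2"] ppos qp c0 c2lt by auto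

lemma xhf: "0 \<le> xh" "xh \<le> e'" "xh \<le> xs" "-e' \<le> xh" "-1 < xh" "xh < 1"
  using xr(2) e'p e'1 by auto

lemma Qneg: "2*q*c*xh^2 + pp*(1-c^2)*xh - 2*q*c \<le> 0"
proof -
  have "xh^2 \<le> xs^2" using xhf by (intro power_mono) auto
  hence "2*q*c*xh^2 \<le> 2*q*c*xs^2" using qp c0 by (intro mult_left_mono) auto
  moreover have "pp*(1-c^2)*xh \<le> pp*(1-c^2)*xs" using xhf ppos c2lt by (intro mult_left_mono) auto
  ultimately show ?thesis using xr(1) by (rule lin3)
qed

lemma key_xi: "FF - pp/(1+xh) \<le> RR - pp/(1-xh)"
proof -
  have "(RR - pp/(1-xh)) - (FF - pp/(1+xh)) = -2*(2*q*c*xh^2 + pp*(1-c^2)*xh - 2*q*c)/((1-c^2)*(1-xh^2))"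
    by (rule xi_ident) (use c0 c1 xhf in auto)
  moreover have "1 - xh^2 > 0"
  proof -
    have "\<bar>xh\<bar> < 1" using xhf by auto
    then have "xh^2 < 1" by (simp add: abs_square_less_1)
    then show ?thesis by simp
  qed
  hence "0 \<le> -2*(2*q*c*xh^2 + pp*(1-c^2)*xh - 2*q*c)/((1-c^2)*(1-xh^2))"
    using Qneg c2lt by (intro divide_nonneg_pos) auto
  ultimately show ?thesis by linarith
qed

lemma er: "pp*c^2*es^2 + AA*es + AA - pp = 0" "es \<ge> 0 \<longleftrightarrow> pp \<ge> AA"
  using e_root[of pp AA c] ppos AApos c0 c1 by auto

lemma ehf: "0 \<le> eh" "eh \<le> 1" by auto

lemma eh_pos: assumes "eh > 0" shows "eh \<le> es" "0 < es" "pp*c^2*eh^2 + AA*eh + AA - pp \<le> 0"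
proof -
  show "eh \<le> es" "0 < es" using assms by auto
  have "eh^2 \<le> es^2" using assms \<open>eh \<le> es\<close> by (intro power_mono) auto
  hence "pp*c^2*eh^2 \<le> pp*c^2*es^2" using ppos by (intro mult_left_mono) auto
  moreover have "AA*eh \<le> AA*es" using AApos \<open>eh \<le> es\<close> by (intro mult_left_mono) auto
  ultimately show "pp*c^2*eh^2 + AA*eh + AA - pp \<le> 0" using er(1) by (rule lin4)
qed

lemma eid: assumes "0 \<le> y" "y \<le> 1"
  shows "(QQ + q') - (fp q c y + fm q c y) = -2*(pp*c^2*y^2 + AA*y + AA - pp)/((1-e'^2)*(1-y^2*c^2))"
    "1-y^2*c^2 > 0"
proof -
  show "(QQ + q') - (fp q c y + fm q c y) = -2*(pp*c^2*y^2 + AA*y + AA - pp)/((1-e'^2)*(1-y^2*c^2))"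
    by (rule e_ident) (use assms c0 c1 e'p e'1 in auto)
  have "y*c < 1" using ec_lt1[OF c0 c1 assms] .
  moreover have "0 \<le> y*c" using assms c0 by simp
  ultimately have "(y*c)*(y*c) \<le> 1*(y*c)" by (intro mult_right_mono) auto
  then show "1-y^2*c^2 > 0" using \<open>y*c < 1\<close> by (simp add: power2_eq_square algebra_simps)
qed

lemma key_e: assumes "eh > 0" shows "fp q c eh + fm q c eh \<le> QQ + q'"
proof -
  have "0 \<le> -2*(pp*c^2*eh^2 + AA*eh + AA - pp)/((1-e'^2)*(1-eh^2*c^2))"
    using eh_pos[OF assms] e2lt eid(2)[OF ehf] by (intro divide_nonneg_pos) auto
  then show ?thesis using eid(1)[OF ehf] by linarith
qed

lemma mm1: "pp - q \<le> MM" by (rule mx1)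
lemma mm2: "min (RR - pp/(1-xh)) (FF - q') \<le> MM" by (rule mx2)
lemma mm3: "min (QQ - fp q c eh) (RR - q') \<le> MM" by (rule mx3)

lemma up_bound:
  assumes e0: "0\<le>e" and e1: "e\<le>1" and x0: "-e'\<le>x" and x1: "x\<le>e'"
  shows "DD e x \<le> MM"
proof -
  note r = ranges[OF assms]
  define a where "a = pp/(1+x)"
  define b where "b = pp/(1-x)"
  define f where "f = fp q c e"
  define g where "g = fm q c e"
  have r': "q' \<le> a" "a \<le> QQ" "q' \<le> b" "b \<le> QQ" "q \<le> f" "f \<le> FF" "q \<le> g" "g \<le> RR" "f \<le> g"
    using r unfolding a_def b_def f_def g_def by auto
  have D: "DD e x = min \<bar>a - f\<bar> \<bar>b - g\<bar>" unfolding a_def b_def f_def g_def by simp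
  define T where "T = min \<bar>a - f\<bar> \<bar>b - g\<bar>"
  have T1: "T \<le> \<bar>a - f\<bar>" "T \<le> \<bar>b - g\<bar>" unfolding T_def by auto
  have xr1: "-1 < x" "x < 1" using x0 x1 e'1 by auto
  consider (i) "a - f \<ge> 0" "b - g \<ge> 0" | (ii) "a - f \<le> 0" "b - g \<le> 0"
    | (iii) "(a-f \<ge> 0 \<and> b-g \<le> 0) \<or> (a-f \<le> 0 \<and> b-g \<ge> 0)" by linarith
  then have "T \<le> MM"
  proof cases
    case i
    have "min a b \<le> pp" unfolding a_def b_def using min_ab[OF ppos xr1] .
    hence "T \<le> pp - q" using T1 i r' by (auto simp: min_le_iff_disj)
    then show ?thesis using mm1 by linarith
  next
    case ii
    have T2: "T \<le> FF - a" "T \<le> RR - b" using T1 ii r' by auto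
    have "T \<le> min (RR - pp/(1-xh)) (FF - q')"
    proof (cases "xh \<le> x")
      case True
      have "pp/(1-xh) \<le> b" unfolding b_def using a_mono[OF ppos xhf(5) True xr1(2)] by simp
      then show ?thesis using T2 r' by auto
    next
      case False
      have "x \<le> xh" using False by linarith
      have "pp/(1+xh) \<le> a" unfolding a_def using conjunct1[OF a_mono[OF ppos xr1(1) \<open>x \<le> xh\<close> xhf(6)]] .
      moreover have "q' \<le> pp/(1+xh)" using a_bounds(1)[OF q'p e'p e'1 xhf(4) xhf(2)] .
      ultimately show ?thesis using T2 key_xi by auto
    qed
    then show ?thesis using mm2 by linarith
  next
    case iii
    have T3: "T \<le> QQ - f" "T \<le> g - q'" using iii T1 r' by auto
    have "T \<le> min (QQ - fp q c eh) (RR - q')"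
    proof (cases "eh \<le> e")
      case True
      have "fp q c eh \<le> f" unfolding f_def using fp_mono[OF c0 _ ehf(1) True e1 qp] c1 by simp
      then show ?thesis using T3 r' by auto
    next
      case False
      hence ep: "eh > 0" using e0 by linarith
      have "e \<le> eh" using False by linarith
      have "g \<le> fm q c eh" unfolding g_def using fm_mono[OF c0 c1 e0 \<open>e \<le> eh\<close> ehf(2) qp] .
      moreover have "fm q c eh \<le> RR" using fm_hi[OF c0 c1 ehf qp] .
      ultimately show ?thesis using T3 key_e[OF ep] by auto
    qed
    then show ?thesis using mm3 by linarith
  qed
  then show ?thesis unfolding D T_def .
qed


lemma pt1: "pp - q \<le> DD 0 0" unfolding fp0 fm0 by simp

lemma pt2: "min (RR - pp/(1-xh)) (FF - q') \<le> DD 1 xh"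
proof (cases "xs \<le> e'")
  case True
  hence xe: "xh = xs" by simp
  have "(RR - pp/(1-xh)) - (FF - pp/(1+xh)) = -2*(2*q*c*xh^2 + pp*(1-c^2)*xh - 2*q*c)/((1-c^2)*(1-xh^2))"
    by (rule xi_ident) (use c0 c1 xhf in auto)
  also have "2*q*c*xh^2 + pp*(1-c^2)*xh - 2*q*c = 0" unfolding xe by (rule xr(1))
  finally have eq: "RR - pp/(1-xh) = FF - pp/(1+xh)" by simp
  have "RR - pp/(1-xh) \<le> \<bar>pp/(1+xh) - FF\<bar>" using eq by (rule g1)
  moreover have "RR - pp/(1-xh) \<le> \<bar>pp/(1-xh) - RR\<bar>" by (rule g2)
  ultimately have "RR - pp/(1-xh) \<le> DD 1 xh" unfolding fp1 fm1 by (rule min.boundedI)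
  then show ?thesis by (rule min.coboundedI1)
next
  case False
  hence xe: "xh = e'" by simp
  have "FF - q' \<le> \<bar>pp/(1+xh) - FF\<bar>" unfolding xe a_e'1 by (rule g2)
  moreover have "RR - pp/(1-xh) \<le> \<bar>pp/(1-xh) - RR\<bar>" by (rule g2)
  ultimately have "min (FF - q') (RR - pp/(1-xh)) \<le> DD 1 xh" unfolding fp1 fm1 by (rule min.mono)
  then show ?thesis by (simp add: min.commute)
qed

lemma pt3: "min (QQ - fp q c eh) (RR - q') \<le> DD eh (-e')"
proof -
  have d: "DD eh (-e') = min \<bar>QQ - fp q c eh\<bar> \<bar>q' - fm q c eh\<bar>" unfolding a_e'2 ..
  have A1: "QQ - fp q c eh \<le> \<bar>QQ - fp q c eh\<bar>" by (rule abs_ge_self)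
  have A2: "fm q c eh - q' \<le> \<bar>q' - fm q c eh\<bar>" by (rule g2)
  have "min (QQ - fp q c eh) (RR - q') \<le> min (QQ - fp q c eh) (fm q c eh - q')"
  proof (cases "es \<ge> 1")
    case True
    hence "eh = 1" by simp
    hence "fm q c eh = RR" using fm1 by simp
    then show ?thesis by simp
  next
    case F1: False
    show ?thesis
    proof (cases "es \<ge> 0")
      case True
      hence ee: "eh = es" using F1 by simp
      have "(QQ + q') - (fp q c eh + fm q c eh) = -2*(pp*c^2*eh^2 + AA*eh + AA - pp)/((1-e'^2)*(1-eh^2*c^2))"
        using eid(1)[OF ehf] .
      also have "pp*c^2*eh^2 + AA*eh + AA - pp = 0" unfolding ee by (rule er(1))
      finally have "fm q c eh - q' = QQ - fp q c eh" by simp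
      then show ?thesis by (intro min.coboundedI1) simp
    next
      case False
      hence ee: "eh = 0" by simp
      have "pp < AA" using False er(2) by linarith
      have "(QQ + q') - (fp q c 0 + fm q c 0) = -2*(pp*c^2*0^2 + AA*0 + AA - pp)/((1-e'^2)*(1-0^2*c^2))"
        using eid(1)[of 0] by simp
      also have "\<dots> < 0" using \<open>pp < AA\<close> e2lt by (simp add: divide_neg_pos)
      finally have "QQ - q < q - q'" unfolding fp0 fm0 by linarith
      then show ?thesis unfolding ee fp0 fm0 by (intro min.coboundedI1) simp
    qed
  qed
  also have "\<dots> \<le> DD eh (-e')" unfolding d using A1 A2 by (rule min.mono)
  finally show ?thesis .
qed

lemma up_ex: "\<exists>e x. 0\<le>e \<and> e\<le>1 \<and> -e'\<le>x \<and> x\<le>e' \<and> DD e x = MM"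
proof -
  have z: "-e' \<le> 0" "0 \<le> e'" "(0::real) \<le> 1" "(1::real) \<le> 1" "-e' \<le> -e'" "-e' \<le> e'" "(0::real) \<le> 0" using e'p by auto
  have b1: "DD 0 0 \<le> MM" by (rule up_bound[OF z(7) z(3) z(1) z(2)])
  have b2: "DD 1 xh \<le> MM" by (rule up_bound[OF z(3) z(4) xhf(4) xhf(2)])
  have b3: "DD eh (-e') \<le> MM" by (rule up_bound[OF ehf z(5) z(6)])
  have "MM = pp - q \<or> MM = min (RR - pp/(1-xh)) (FF - q') \<or> MM = min (QQ - fp q c eh) (RR - q')"
    by (rule mx_cases)
  then show ?thesis
  proof (elim disjE)
    assume "MM = pp - q"
    then have "DD 0 0 = MM" using b1 pt1 by (rule sandw)
    then show ?thesis using z(7) z(3) z(1) z(2) by (intro exI[of _ 0] exI[of _ 0] conjI) assumption+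
  next
    assume "MM = min (RR - pp/(1-xh)) (FF - q')"
    then have "DD 1 xh = MM" using b2 pt2 by (rule sandw)
    then show ?thesis using z(3) z(4) xhf(4) xhf(2) by (intro exI[of _ 1] exI[of _ xh] conjI) assumption+
  next
    assume "MM = min (QQ - fp q c eh) (RR - q')"
    then have "DD eh (-e') = MM" using b3 pt3 by (rule sandw)
    then show ?thesis using ehf z(5) z(6) by (intro exI[of _ eh] exI[of _ "-e'"] conjI) assumption+
  qed
qed
end


definition DDg :: "real \<Rightarrow> real \<Rightarrow> real \<Rightarrow> real \<Rightarrow> real \<Rightarrow> real \<Rightarrow> real" where
  "DDg q' e' q c e x = min \<bar>q'*(1+e')/(1+x) - fp q c e\<bar> \<bar>q'*(1+e')/(1-x) - fm q c e\<bar>"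
definition Log :: "real \<Rightarrow> real \<Rightarrow> real \<Rightarrow> real \<Rightarrow> real" where
  "Log q' e' q c = max 0 (max (q' - 2*q/(1-c)) (q - q'*(1+e')/(1-e')))"
definition xsg :: "real \<Rightarrow> real \<Rightarrow> real \<Rightarrow> real \<Rightarrow> real" where
  "xsg q' e' q c = 4*q*c/(q'*(1+e')*(1-c^2) + sqrt((q'*(1+e'))^2*(1-c^2)^2 + 16*q^2*c^2))"
definition esg :: "real \<Rightarrow> real \<Rightarrow> real \<Rightarrow> real \<Rightarrow> real" where
  "esg q' e' q c = 2*(q'*(1+e') - q*(1-e'^2))/(q*(1-e'^2) + sqrt((q*(1-e'^2))^2 + 4*(q'*(1+e'))*c^2*(q'*(1+e') - q*(1-e'^2))))"
definition MMg :: "real \<Rightarrow> real \<Rightarrow> real \<Rightarrow> real \<Rightarrow> real" where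
  "MMg q' e' q c = max (q'*(1+e') - q)
     (max (min (2*q/(1-c) - q'*(1+e')/(1 - min (xsg q' e' q c) e')) (2*q/(1+c) - q'))
          (min (q'*(1+e')/(1-e') - fp q c (max 0 (min (esg q' e' q c) 1))) (2*q/(1-c) - q')))"

lemma lo_bound':
  assumes "q'>0" "0<e'" "e'<1" "q>0" "0\<le>c" "c<1" "0\<le>e" "e\<le>1" "-e'\<le>x" "x\<le>e'"
  shows "Log q' e' q c \<le> DDg q' e' q c e x"
  unfolding Log_def DDg_def by (rule lo_bound[OF assms])
lemma up_bound':
  assumes "q'>0" "0<e'" "e'<1" "q>0" "0\<le>c" "c<1" "0\<le>e" "e\<le>1" "-e'\<le>x" "x\<le>e'"
  shows "DDg q' e' q c e x \<le> MMg q' e' q c"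
  unfolding MMg_def DDg_def xsg_def esg_def by (rule up_bound[OF assms])
lemma lo_ex':
  assumes "q'>0" "0<e'" "e'<1" "q>0" "0\<le>c" "c<1"
  shows "\<exists>e x. 0\<le>e \<and> e\<le>1 \<and> -e'\<le>x \<and> x\<le>e' \<and> DDg q' e' q c e x = Log q' e' q c"
  unfolding Log_def DDg_def by (rule lo_ex[OF assms])
lemma up_ex':
  assumes "q'>0" "0<e'" "e'<1" "q>0" "0\<le>c" "c<1"
  shows "\<exists>e x. 0\<le>e \<and> e\<le>1 \<and> -e'\<le>x \<and> x\<le>e' \<and> DDg q' e' q c e x = MMg q' e' q c"
  unfolding MMg_def DDg_def xsg_def esg_def by (rule up_ex[OF assms])


lemma pdiv_ne: "b \<noteq> 0 \<Longrightarrow> pdiv a b = ereal (a/b)" by (simp add: pdiv_def)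

lemma D1_x: assumes "0<e'" "(e,w') \<in> D1" shows "0 \<le> e" "e \<le> 1" "-e' \<le> e'*cos w'" "e'*cos w' \<le> e'"
proof -
  show "0 \<le> e" "e \<le> 1" using assms by (auto simp: D1_def)
  have "\<bar>e'*cos w'\<bar> \<le> e'*1" using assms by (simp add: abs_mult)
  then show "-e' \<le> e'*cos w'" "e'*cos w' \<le> e'" by linarith+
qed

lemma D1_pt: assumes "0<e'" "0\<le>e" "e\<le>1" "-e'\<le>x" "x\<le>e'"
  shows "(e, arccos (x/e')) \<in> D1" "e'*cos (arccos (x/e')) = x"
proof -
  have "-1 \<le> x/e'" "x/e' \<le> 1" using assms by (simp_all add: divide_simps)
  then show "(e, arccos (x/e')) \<in> D1" using assms arccos_lbound arccos_ubound by (auto simp: D1_def)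
  show "e'*cos (arccos (x/e')) = x" using \<open>-1 \<le> x/e'\<close> \<open>x/e' \<le> 1\<close> assms by simp
qed

lemma gen_case:
  fixes q' e' q w :: real
  assumes q'p: "q' > 0" and e'p: "0 < e'" and e'1: "e' < 1"
    and qp: "0 < q" and w0: "0 < w" and w1: "w \<le> pi / 2"
  shows "(\<exists>(e, w') \<in> D1. delta_nod q' e' q e w w' = max 0 (max (l_int q' e' q w) (l_ext q' e' q w)))
       \<and> (\<forall>(e, w') \<in> D1. max 0 (max (l_int q' e' q w) (l_ext q' e' q w)) \<le> delta_nod q' e' q e w w')
       \<and> (\<exists>(e, w') \<in> D1. delta_nod q' e' q e w w' = max (u_int q' e' q w) (max (u_ext q' e' q w) (u_link q' e' q w)))
       \<and> (\<forall>(e, w') \<in> D1. delta_nod q' e' q e w w' \<le> max (u_int q' e' q w) (max (u_ext q' e' q w) (u_link q' e' q w)))"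
proof -
  define c where "c = cos w"
  have c0: "0 \<le> c" unfolding c_def using w0 w1 by (intro cos_ge_zero) auto
  have c1: "c < 1" unfolding c_def using cos_monotone_0_pi[of 0 w] w0 w1 by simp
  have dn: "delta_nod q' e' q e w w' = ereal (DDg q' e' q c e (e'*cos w'))"
    if "0 \<le> e" "e \<le> 1" for e w'
  proof -
    have x: "-e' \<le> e'*cos w'" "e'*cos w' \<le> e'"
    proof -
      have "\<bar>e'*cos w'\<bar> \<le> e'*1" using e'p by (simp add: abs_mult)
      then show "-e' \<le> e'*cos w'" "e'*cos w' \<le> e'" by linarith+
    qed
    have n1: "1 + e'*cos w' \<noteq> 0" "1 - e'*cos w' \<noteq> 0" using x e'1 by auto
    have "0 \<le> e*c" using that c0 by simp
    hence n2: "1 + e*c \<noteq> 0" by linarith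
    have n3: "1 - e*c \<noteq> 0" using ec_lt1[OF c0 c1 that] by simp
    show ?thesis unfolding delta_nod_def r_plus_def r_minus_def DDg_def fp_def fm_def
      using n1 n2 n3 unfolding c_def by (simp add: pdiv_ne)
  qed
  have lo: "max 0 (max (l_int q' e' q w) (l_ext q' e' q w)) = ereal (Log q' e' q c)"
  proof -
    have "1 - c \<noteq> 0" using c1 by simp
    then show ?thesis unfolding l_int_def l_ext_def Log_def Q_prime_def c_def
      by (simp add: pdiv_ne zero_ereal_def)
  qed
  have s2: "sin w ^ 2 = 1 - c^2" unfolding c_def by (rule sin_squared_eq)
  have s4: "sin w ^ 4 = (1 - c^2)^2" using s2 by (metis power_mult num_double numeral_times_numeral mult_2)
  have xse: "xi_star q' e' q w = xsg q' e' q c"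
    unfolding xi_star_def xsg_def p_prime_def s2 s4 c_def ..
  have ese: "e_star q' e' q w = esg q' e' q c"
    unfolding e_star_def esg_def p_prime_def c_def ..
  have up: "max (u_int q' e' q w) (max (u_ext q' e' q w) (u_link q' e' q w)) = ereal (MMg q' e' q c)"
  proof -
    have "1 - c \<noteq> 0" "1 + c \<noteq> 0" using c0 c1 by auto
    then show ?thesis
      unfolding u_int_def u_ext_def u_link_def MMg_def xi_hat_def e_hat_def xse ese p_prime_def Q_prime_def fp_def
      unfolding c_def by (simp add: pdiv_ne)
  qed
  note asm = q'p e'p e'1 qp c0 c1
  show ?thesis unfolding lo up
  proof (intro conjI)
    obtain e x where ex: "0\<le>e" "e\<le>1" "-e'\<le>x" "x\<le>e'" "DDg q' e' q c e x = Log q' e' q c"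
      using lo_ex'[OF asm] by blast
    have "delta_nod q' e' q e w (arccos (x/e')) = ereal (Log q' e' q c)"
      using dn[OF ex(1,2), of "arccos (x/e')"] D1_pt(2)[OF e'p ex(1-4)] ex(5) by simp
    then show "\<exists>(e, w') \<in> D1. delta_nod q' e' q e w w' = ereal (Log q' e' q c)"
      using D1_pt(1)[OF e'p ex(1-4)] by (intro bexI[of _ "(e, arccos (x/e'))"]) simp_all
  next
    show "\<forall>(e, w') \<in> D1. ereal (Log q' e' q c) \<le> delta_nod q' e' q e w w'"
    proof (clarify)
      fix e w' assume "(e, w') \<in> D1"
      note d = D1_x[OF e'p this]
      show "ereal (Log q' e' q c) \<le> delta_nod q' e' q e w w'"
        unfolding dn[OF d(1,2)] using lo_bound'[OF asm d] by simp
    qed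
  next
    obtain e x where ex: "0\<le>e" "e\<le>1" "-e'\<le>x" "x\<le>e'" "DDg q' e' q c e x = MMg q' e' q c"
      using up_ex'[OF asm] by blast
    have "delta_nod q' e' q e w (arccos (x/e')) = ereal (MMg q' e' q c)"
      using dn[OF ex(1,2), of "arccos (x/e')"] D1_pt(2)[OF e'p ex(1-4)] ex(5) by simp
    then show "\<exists>(e, w') \<in> D1. delta_nod q' e' q e w w' = ereal (MMg q' e' q c)"
      using D1_pt(1)[OF e'p ex(1-4)] by (intro bexI[of _ "(e, arccos (x/e'))"]) simp_all
  next
    show "\<forall>(e, w') \<in> D1. delta_nod q' e' q e w w' \<le> ereal (MMg q' e' q c)"
    proof (clarify)
      fix e w' assume "(e, w') \<in> D1"
      note d = D1_x[OF e'p this]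
      show "delta_nod q' e' q e w w' \<le> ereal (MMg q' e' q c)"
        unfolding dn[OF d(1,2)] using up_bound'[OF asm d] by simp
    qed
  qed
qed


definition Gz :: "real \<Rightarrow> real \<Rightarrow> real \<Rightarrow> real \<Rightarrow> real \<Rightarrow> real" where
  "Gz q' e' q e x = (if e = 1 then \<bar>q'*(1+e')/(1+x) - q\<bar>
      else min \<bar>q'*(1+e')/(1+x) - q\<bar> \<bar>q'*(1+e')/(1-x) - q*(1+e)/(1-e)\<bar>)"

context
  fixes q' e' q :: real
  assumes q'p: "q'>0" and e'p: "0<e'" and e'1: "e'<1" and qp: "q>0"
begin

lemma z_bound:
  assumes "0\<le>e" "e\<le>1" "-e'\<le>x" "x\<le>e'"
  shows "max 0 (q - q'*(1+e')/(1-e')) \<le> Gz q' e' q e x"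
    "Gz q' e' q e x \<le> max (q'*(1+e') - q) (max (q - q') (q'*(1+e')/(1-e') - q))"
proof -
  note ab = a_bounds[OF q'p e'p e'1 assms(3,4)]
  define a where "a = q'*(1+e')/(1+x)"
  define b where "b = q'*(1+e')/(1-x)"
  define QQ where "QQ = q'*(1+e')/(1-e')"
  have r: "q' \<le> a" "a \<le> QQ" "q' \<le> b" "b \<le> QQ" using ab unfolding a_def b_def QQ_def by auto
  have G1: "Gz q' e' q e x \<le> \<bar>a - q\<bar>" unfolding Gz_def a_def by simp
  have "\<bar>a - q\<bar> \<le> max (q - q') (QQ - q)" using r by (auto simp: abs_if le_max_iff_disj)
  then show "Gz q' e' q e x \<le> max (q'*(1+e') - q) (max (q - q') (q'*(1+e')/(1-e') - q))"
    using G1 unfolding QQ_def by simp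
  have A1: "max 0 (q - QQ) \<le> \<bar>a - q\<bar>" using r by (simp add: abs_if)
  show "max 0 (q - q'*(1+e')/(1-e')) \<le> Gz q' e' q e x"
  proof (cases "e = 1")
    case True
    then show ?thesis using A1 unfolding Gz_def a_def QQ_def by simp
  next
    case False
    hence "e < 1" using assms by simp
    have "q*(1-e) \<le> q*(1+e)" using qp assms by simp
    hence "q \<le> q*(1+e)/(1-e)" using \<open>e<1\<close> by (simp add: le_divide_eq)
    hence "max 0 (q - QQ) \<le> \<bar>b - q*(1+e)/(1-e)\<bar>" using r by (simp add: abs_if)
    then show ?thesis using A1 False unfolding Gz_def a_def b_def QQ_def by simp
  qed
qed

lemma z_lo_ex: "\<exists>e x. 0\<le>e \<and> e\<le>1 \<and> -e'\<le>x \<and> x\<le>e' \<and> Gz q' e' q e x = max 0 (q - q'*(1+e')/(1-e'))"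
proof -
  have QQgt: "q' < q'*(1+e')/(1-e')"
  proof -
    have "q'*(1-e') < q'*(1+e')" using q'p e'p by simp
    then show ?thesis using e'1 by (simp add: less_divide_eq)
  qed
  have a1: "q'*(1+e')/(1-(-e')) = q'" "q'*(1+e')/(1+(-e')) = q'*(1+e')/(1-e')" using e'p by simp_all
  show ?thesis
  proof (cases "q > q'*(1+e')/(1-e')")
    case True
    have "Gz q' e' q 0 (-e') = q - q'*(1+e')/(1-e')" unfolding Gz_def a1 using True QQgt by simp
    then show ?thesis using True e'p by (intro exI[of _ 0] exI[of _ "-e'"]) simp
  next
    case F1: False
    show ?thesis
    proof (cases "q \<ge> q'")
      case True
      define x where "x = q'*(1+e')/q - 1"
      have "q'*(1+e') \<le> (1+e')*q" using True e'p by (simp add: mult.commute mult_right_mono)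
      hence "q'*(1+e')/q \<le> 1+e'" using qp by (simp add: divide_le_eq)
      hence x1: "x \<le> e'" unfolding x_def by linarith
      have "q \<le> q'*(1+e')/(1-e')" using F1 by simp
      hence "q*(1-e') \<le> q'*(1+e')" using e'1 by (simp add: le_divide_eq)
      hence "(1-e')*q \<le> q'*(1+e')" by (simp add: mult.commute)
      hence "1 - e' \<le> q'*(1+e')/q" using qp by (simp add: le_divide_eq)
      hence x0: "-e' \<le> x" unfolding x_def by linarith
      have "q'*(1+e')/(1+x) = q" unfolding x_def using qp q'p e'p by simp
      hence "Gz q' e' q 1 x = 0" unfolding Gz_def by simp
      moreover have "max 0 (q - q'*(1+e')/(1-e')) = 0" using F1 by simp
      ultimately show ?thesis using x0 x1 by (intro exI[of _ 1] exI[of _ x]) simp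
    next
      case False
      define e where "e = (q'-q)/(q+q')"
      have e0: "0 \<le> e" unfolding e_def using False qp by simp
      have e1: "e < 1" unfolding e_def using qp q'p by simp
      have "q*(1+e)/(1-e) = q'"
      proof -
        have "1+e = 2*q'/(q+q')" "1-e = 2*q/(q+q')" unfolding e_def using qp q'p by (simp_all add: field_simps)
        then show ?thesis using qp q'p by simp
      qed
      hence "Gz q' e' q e (-e') = 0" unfolding Gz_def a1 using e1 by simp
      moreover have "max 0 (q - q'*(1+e')/(1-e')) = 0" using F1 by simp
      ultimately show ?thesis using e0 e1 e'p by (intro exI[of _ e] exI[of _ "-e'"]) simp
    qed
  qed
qed

lemma z_up_ex: "\<exists>e x. 0\<le>e \<and> e\<le>1 \<and> -e'\<le>x \<and> x\<le>e' \<and> Gz q' e' q e x = max (q'*(1+e') - q) (max (q - q') (q'*(1+e')/(1-e') - q))"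
proof -
  define QQ where "QQ = q'*(1+e')/(1-e')"
  have QQgt: "q' < QQ" "q'*(1+e') \<le> QQ"
  proof -
    have "q'*(1-e') < q'*(1+e')" using q'p e'p by simp
    then show "q' < QQ" unfolding QQ_def using e'1 by (simp add: less_divide_eq)
    have "q'*(1+e')*(1-e') \<le> q'*(1+e')" using q'p e'p by (simp add: mult_le_cancel_left1)
    then show "q'*(1+e') \<le> QQ" unfolding QQ_def using e'1 by (simp add: le_divide_eq)
  qed
  have a1: "q'*(1+e')/(1-(-e')) = q'" "q'*(1+e')/(1+(-e')) = QQ" "q'*(1+e')/(1+e') = q'"
    unfolding QQ_def using e'p by simp_all
  have M: "max (q'*(1+e') - q) (max (q - q') (QQ - q)) = max (q - q') (QQ - q)" using QQgt by simp
  show ?thesis unfolding QQ_def[symmetric] M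
  proof (cases "q - q' \<ge> QQ - q")
    case True
    have "Gz q' e' q 1 e' = max (q - q') (QQ - q)" unfolding Gz_def a1 using True QQgt by simp
    then show "\<exists>e x. 0\<le>e \<and> e\<le>1 \<and> -e'\<le>x \<and> x\<le>e' \<and> Gz q' e' q e x = max (q - q') (QQ - q)"
      using e'p by (intro exI[of _ 1] exI[of _ e']) simp
  next
    case False
    have "Gz q' e' q 1 (-e') = max (q - q') (QQ - q)" unfolding Gz_def a1 using False QQgt by simp
    then show "\<exists>e x. 0\<le>e \<and> e\<le>1 \<and> -e'\<le>x \<and> x\<le>e' \<and> Gz q' e' q e x = max (q - q') (QQ - q)"
      using e'p by (intro exI[of _ 1] exI[of _ "-e'"]) simp
  qed
qed

end


lemma zero_case:
  fixes q' e' q w :: real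
  assumes q'p: "q' > 0" and e'p: "0 < e'" and e'1: "e' < 1"
    and qp: "0 < q" and w0: "w = 0"
  shows "(\<exists>(e, w') \<in> D1. delta_nod q' e' q e w w' = max 0 (max (l_int q' e' q w) (l_ext q' e' q w)))
       \<and> (\<forall>(e, w') \<in> D1. max 0 (max (l_int q' e' q w) (l_ext q' e' q w)) \<le> delta_nod q' e' q e w w')
       \<and> (\<exists>(e, w') \<in> D1. delta_nod q' e' q e w w' = max (u_int q' e' q w) (max (u_ext q' e' q w) (u_link q' e' q w)))
       \<and> (\<forall>(e, w') \<in> D1. delta_nod q' e' q e w w' \<le> max (u_int q' e' q w) (max (u_ext q' e' q w) (u_link q' e' q w)))"
proof -
  have cw: "cos w = 1" using w0 by simp
  define Lz where "Lz = max 0 (q - q'*(1+e')/(1-e'))"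
  define Mz where "Mz = max (q'*(1+e') - q) (max (q - q') (q'*(1+e')/(1-e') - q))"
  have dn: "delta_nod q' e' q e w w' = ereal (Gz q' e' q e (e'*cos w'))"
    if "0 \<le> e" "e \<le> 1" for e w'
  proof -
    have x: "-e' \<le> e'*cos w'" "e'*cos w' \<le> e'"
    proof -
      have "\<bar>e'*cos w'\<bar> \<le> e'*1" using e'p by (simp add: abs_mult)
      then show "-e' \<le> e'*cos w'" "e'*cos w' \<le> e'" by linarith+
    qed
    have n1: "1 + e'*cos w' \<noteq> 0" "1 - e'*cos w' \<noteq> 0" using x e'1 by auto
    have n2: "1 + e \<noteq> 0" using that by simp
    have rp: "r_plus q e w = ereal q" unfolding r_plus_def cw using n2 by (simp add: pdiv_ne)
    show ?thesis
    proof (cases "e = 1")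
      case True
      have rm: "r_minus q e w = \<infinity>" unfolding r_minus_def cw True by (simp add: pdiv_def)
      have "delta_nod q' e' q e w w' = min \<bar>r_plus q' e' w' - ereal q\<bar> \<bar>r_minus q' e' w' - \<infinity>\<bar>"
        unfolding delta_nod_def rp rm ..
      then show ?thesis using n1 True by (simp add: r_plus_def r_minus_def pdiv_ne Gz_def)
    next
      case False
      have "1 - e \<noteq> 0" using False by simp
      then have rm: "r_minus q e w = ereal (q*(1+e)/(1-e))" unfolding r_minus_def cw by (simp add: pdiv_ne)
      have "delta_nod q' e' q e w w' = min \<bar>r_plus q' e' w' - ereal q\<bar> \<bar>r_minus q' e' w' - ereal (q*(1+e)/(1-e))\<bar>"
        unfolding delta_nod_def rp rm ..
      then show ?thesis using n1 False by (simp add: r_plus_def r_minus_def pdiv_ne Gz_def)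
    qed
  qed
  have lo: "max 0 (max (l_int q' e' q w) (l_ext q' e' q w)) = ereal Lz"
    unfolding l_int_def l_ext_def Lz_def Q_prime_def cw by (simp add: pdiv_def zero_ereal_def)
  have eh0: "0 \<le> e_hat q' e' q w" unfolding e_hat_def by simp
  have up: "max (u_int q' e' q w) (max (u_ext q' e' q w) (u_link q' e' q w)) = ereal Mz"
  proof -
    have "q * (1 + e_hat q' e' q w) / (1 + e_hat q' e' q w * 1) = q" using eh0 by simp
    then show ?thesis
      unfolding u_int_def u_ext_def u_link_def Mz_def p_prime_def Q_prime_def cw
      by (simp add: pdiv_def)
  qed
  note asm = q'p e'p e'1 qp
  show ?thesis unfolding lo up
  proof (intro conjI)
    obtain e x where ex: "0\<le>e" "e\<le>1" "-e'\<le>x" "x\<le>e'" "Gz q' e' q e x = Lz"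
      using z_lo_ex[OF asm] unfolding Lz_def by blast
    have "delta_nod q' e' q e w (arccos (x/e')) = ereal Lz"
      using dn[OF ex(1,2), of "arccos (x/e')"] D1_pt(2)[OF e'p ex(1-4)] ex(5) by simp
    then show "\<exists>(e, w') \<in> D1. delta_nod q' e' q e w w' = ereal Lz"
      using D1_pt(1)[OF e'p ex(1-4)] by (intro bexI[of _ "(e, arccos (x/e'))"]) simp_all
  next
    show "\<forall>(e, w') \<in> D1. ereal Lz \<le> delta_nod q' e' q e w w'"
    proof (clarify)
      fix e w' assume "(e, w') \<in> D1"
      note d = D1_x[OF e'p this]
      show "ereal Lz \<le> delta_nod q' e' q e w w'"
        unfolding dn[OF d(1,2)] using z_bound(1)[OF asm d] unfolding Lz_def[symmetric] by simp
    qed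
  next
    obtain e x where ex: "0\<le>e" "e\<le>1" "-e'\<le>x" "x\<le>e'" "Gz q' e' q e x = Mz"
      using z_up_ex[OF asm] unfolding Mz_def by blast
    have "delta_nod q' e' q e w (arccos (x/e')) = ereal Mz"
      using dn[OF ex(1,2), of "arccos (x/e')"] D1_pt(2)[OF e'p ex(1-4)] ex(5) by simp
    then show "\<exists>(e, w') \<in> D1. delta_nod q' e' q e w w' = ereal Mz"
      using D1_pt(1)[OF e'p ex(1-4)] by (intro bexI[of _ "(e, arccos (x/e'))"]) simp_all
  next
    show "\<forall>(e, w') \<in> D1. delta_nod q' e' q e w w' \<le> ereal Mz"
    proof (clarify)
      fix e w' assume "(e, w') \<in> D1"
      note d = D1_x[OF e'p this]
      show "delta_nod q' e' q e w w' \<le> ereal Mz"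
        unfolding dn[OF d(1,2)] using z_bound(2)[OF asm d] unfolding Mz_def[symmetric] by simp
    qed
  qed
qed

theorem proposition1:
  fixes q' e' q_max q w :: real
  assumes "q' > 0" and "0 < e'" and "e' < 1" and "q_max > 0"
    and "0 < q" and "q \<le> q_max" and "0 \<le> w" and "w \<le> pi / 2"
  shows "(\<exists>(e, w') \<in> D1. delta_nod q' e' q e w w' = max 0 (max (l_int q' e' q w) (l_ext q' e' q w)))
       \<and> (\<forall>(e, w') \<in> D1. max 0 (max (l_int q' e' q w) (l_ext q' e' q w)) \<le> delta_nod q' e' q e w w')
       \<and> (\<exists>(e, w') \<in> D1. delta_nod q' e' q e w w' = max (u_int q' e' q w) (max (u_ext q' e' q w) (u_link q' e' q w)))
       \<and> (\<forall>(e, w') \<in> D1. delta_nod q' e' q e w w' \<le> max (u_int q' e' q w) (max (u_ext q' e' q w) (u_link q' e' q w)))"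
proof (cases "w = 0")
  case True
  show ?thesis by (rule zero_case[OF assms(1,2,3,5) True])
next
  case False
  hence "0 < w" using assms(7) by simp
  show ?thesis by (rule gen_case[OF assms(1,2,3,5) \<open>0 < w\<close> assms(8)])
qed

end
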